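(* Let $p$ be a prime with $p\equiv\pm3\pmod 8$, $q=p^s$, let $m$ be an integer with $2^m\mid(q-1)$ and $m\ge 3$ if $p\equiv 3\pmod 8$, $m\ge 2$ if $p\equiv -3\pmod 8$, let $\lambda$ be a multiplicative character of order $2^m$ on $\mathbb F_q$, and let $n\ge1$. For $1\le r\le m$, $0\le t\le m$ and odd $c_0$ put $$W_{r,t}(c_0)=\sum_{\substack{j_0=1\\ 2\nmid j_0}}^{2^r-1}G(\lambda^{2^{m-r}j_0})\,\zeta_{2^{m-t}}^{2^{m-r}c_0j_0},\qquad S_t=\sum_{\substack{c_0=1\\2\nmid c_0}}^{2^{m-t}}\Bigl(\sum_{j=1}^{2^m-1} G(\lambda^j)\zeta_{2^{m-t}}^{c_0j}\Bigr)^n.$$ Then $$S_{m-1}+S_m=\Bigl(\sum_{r=1}^{m-1} W_{r,m}(1)+W_{m,m}(1)\Bigr)^n+\Bigl(\sum_{r=1}^{m-1} W_{r,m}(1)-W_{m,m}(1)\Bigr)^n.$$ If $p\equiv 3\pmod{8}$, then $S_{m-2}=2\cdot\bigl(\sum_{r=1}^{m-1} W_{r,m-2}(1)\bigr)^n$, and for $0\le t\le m-3$, $$S_t=2^{m-t-2}\Bigl[\Bigl(\sum_{r=1}^{t+1} W_{r,t}(1)+W_{t+3,t}(1)\Bigr)^n+\Bigl(\sum_{r=1}^{t+1} W_{r,t}(1)-W_{t+3,t}(1)\Bigr)^n\Bigr].$$ If $p\equiv -3\pmod{8}$ and $0\le t\le m-2$, then $$S_t=2^{m-t-2}\Bigl[\Bigl(\sum_{r=1}^{t+1}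 W_{r,t}(1)+W_{t+2,t}(1)\Bigr)^n+\Bigl(\sum_{r=1}^{t+1} W_{r,t}(1)-W_{t+2,t}(1)\Bigr)^n\Bigr].$$
   Context: Multiplicative characters are extended by $\psi(0)=0$; $\zeta_k=e^{2\pi i/k}$. The Gauss sum of a nontrivial character $\psi$ on $\mathbb F_q$ is $G(\psi)=\sum_{x\in\mathbb F_q}\psi(x)\zeta_p^{\mathrm{Tr}(x)}$, with $\mathrm{Tr}$ the trace from $\mathbb F_q$ to $\mathbb F_p$. *)

theory Defs
  imports "HOL-Analysis.Analysis"
begin

definition zeta :: "nat \<Rightarrow> complex" where
  "zeta k = exp (2 * pi * \<i> / of_nat k)"

definition trace_Fq :: "nat \<Rightarrow> nat \<Rightarrow> 'a::{field,finite} \<Rightarrow> 'a" where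
  "trace_Fq p s x = (\<Sum>i<s. x ^ (p ^ i))"

definition trace_nat :: "nat \<Rightarrow> nat \<Rightarrow> 'a::{field,finite} \<Rightarrow> nat" where
  "trace_nat p s x = (THE k. k < p \<and> of_nat k = trace_Fq p s x)"

definition mult_char :: "('a::{field,finite} \<Rightarrow> complex) \<Rightarrow> bool" where
  "mult_char \<psi> \<longleftrightarrow> \<psi> 0 = 0 \<and> (\<forall>x. x \<noteq> 0 \<longrightarrow> \<psi> x \<noteq> 0)
     \<and> (\<forall>x y. \<psi> (x * y) = \<psi> x * \<psi> y)"

definition char_order :: "('a::{field,finite} \<Rightarrow> complex) \<Rightarrow> nat" where
  "char_order \<psi> = (LEAST k. 0 < k \<and> (\<forall>x. x \<noteq> 0 \<longrightarrow> \<psi> x ^ k = 1))"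

text \<open>Power of a character (for j \<ge> 1 this respects the convention psi 0 = 0).\<close>
definition char_pow :: "('a::{field,finite} \<Rightarrow> complex) \<Rightarrow> nat \<Rightarrow> 'a \<Rightarrow> complex" where
  "char_pow \<psi> j = (\<lambda>x. \<psi> x ^ j)"

definition gauss_sum :: "nat \<Rightarrow> nat \<Rightarrow> ('a::{field,finite} \<Rightarrow> complex) \<Rightarrow> complex" where
  "gauss_sum p s \<psi> = (\<Sum>x\<in>UNIV. \<psi> x * zeta p ^ trace_nat p s x)"

definition W_sum :: "nat \<Rightarrow> nat \<Rightarrow> ('a::{field,finite} \<Rightarrow> complex) \<Rightarrow> nat \<Rightarrow> nat \<Rightarrow> nat \<Rightarrow> nat \<Rightarrow> complex" where
  "W_sum p s lam m r t c0 =
     (\<Sum>j0\<in>{j. 1 \<le> j \<and> j \<le> 2^r - 1 \<and> odd j}.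
        gauss_sum p s (char_pow lam (2^(m-r) * j0)) * zeta (2^(m-t)) ^ (2^(m-r) * c0 * j0))"

definition S_sum :: "nat \<Rightarrow> nat \<Rightarrow> ('a::{field,finite} \<Rightarrow> complex) \<Rightarrow> nat \<Rightarrow> nat \<Rightarrow> nat \<Rightarrow> complex" where
  "S_sum p s lam m n t =
     (\<Sum>c0\<in>{c. 1 \<le> c \<and> c \<le> 2^(m-t) \<and> odd c}.
        (\<Sum>j=1..2^m-1. gauss_sum p s (char_pow lam j) * zeta (2^(m-t)) ^ (c0 * j)) ^ n)"

end

theory Submission
  imports Defs "HOL-Number_Theory.Cong"
begin


lemma zeta_pow_N: "N > 0 \<Longrightarrow> zeta N ^ N = 1"
proof -
  assume N: "N > 0"
  have "zeta N ^ N = exp (of_nat N * (2 * pi * \<i> / of_nat N))"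
    unfolding zeta_def by (rule exp_of_nat_mult[symmetric])
  also have "of_nat N * (2 * pi * \<i> / of_nat N) = 2 * pi * \<i>" using N by simp
  also have "exp (2 * pi * \<i>) = 1" by (simp add: exp_eq_1)
  finally show ?thesis .
qed

lemma zeta_add_full: "N > 0 \<Longrightarrow> zeta N ^ (x + N * y) = zeta N ^ x"
  by (simp add: power_add power_mult zeta_pow_N)

lemma zeta_mod: "N > 0 \<Longrightarrow> zeta N ^ a = zeta N ^ (a mod N)"
  by (metis div_mult_mod_eq zeta_add_full add.commute mult.commute)

lemma zeta_cong: "N > 0 \<Longrightarrow> a mod N = b mod N \<Longrightarrow> zeta N ^ a = zeta N ^ b"
  by (metis zeta_mod)

lemma zeta_half: "N > 0 \<Longrightarrow> zeta (2 * N) ^ N = -1"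
proof -
  assume N: "N > 0"
  have "zeta (2*N) ^ N = exp (of_nat N * (2 * pi * \<i> / of_nat (2*N)))"
    unfolding zeta_def by (rule exp_of_nat_mult[symmetric])
  also have "of_nat N * (2 * pi * \<i> / of_nat (2*N)) = of_real pi * \<i>" using N by simp
  finally show ?thesis by simp
qed

lemma zeta_add_half: "N > 0 \<Longrightarrow> odd w \<Longrightarrow> zeta (2 * N) ^ (x + N * w) = -(zeta (2 * N) ^ x)"
  by (simp add: power_add power_mult zeta_half)

lemma zeta_one: "zeta 1 ^ a = 1"
  using zeta_pow_N[of 1] by simp

lemma card_ge2: "CARD('a::{field,finite}) \<ge> 2"
proof -
  have "card {0::'a, 1} \<le> CARD('a)" by (rule card_mono) auto
  thus ?thesis by simp
qed

lemma fermat_field: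
  fixes x :: "'a::{field,finite}"
  assumes "x \<noteq> 0" shows "x ^ (CARD('a) - 1) = 1"
proof -
  let ?A = "UNIV - {0::'a}"
  have inj: "inj_on (\<lambda>y. x * y) ?A" using assms by (auto simp: inj_on_def)
  have img: "(\<lambda>y. x * y) ` ?A = ?A"
    by (rule endo_inj_surj) (use assms inj in auto)
  have "prod id ?A = prod id ((\<lambda>y. x * y) ` ?A)" using img by simp
  also have "\<dots> = prod (\<lambda>y. x * y) ?A" using prod.reindex[OF inj, of id] by simp
  also have "\<dots> = x ^ card ?A * prod id ?A" by (simp add: prod.distrib)
  finally have eq: "prod id ?A = x ^ card ?A * prod id ?A" .
  have nz: "prod id ?A \<noteq> 0" by simp
  have "card ?A = CARD('a) - 1" by (simp add: card_Diff_singleton)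
  with eq nz show ?thesis by simp
qed

lemma frob_id: "(x::'a::{field,finite}) ^ CARD('a) = x"
proof (cases "x = 0")
  case True thus ?thesis using card_ge2[where 'a='a] by simp
next
  case False
  have "CARD('a) = Suc (CARD('a) - 1)" using card_ge2[where 'a='a] by simp
  then have "x ^ CARD('a) = x * x ^ (CARD('a) - 1)" by (metis power_Suc)
  thus ?thesis using fermat_field[OF False] by simp
qed

lemma char_one: "mult_char lam \<Longrightarrow> lam 1 = 1"
  unfolding mult_char_def
  by (metis mult_cancel_left2 mult_1 one_neq_zero)

lemma char_power: "mult_char lam \<Longrightarrow> lam (x ^ k) = lam x ^ k"
  by (induction k) (auto simp: char_one mult_char_def)

context
  fixes p s :: nat
  assumes hq: "CARD('a::{field,finite}) = p ^ s"
begin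

lemma s_pos: "s \<ge> 1"
  using card_ge2[where 'a='a] hq by (cases s) auto

lemma frob_ps: "(x::'a) ^ (p ^ s) = x"
  using frob_id[of x] hq by simp

lemma frob_inj: "inj (\<lambda>x::'a. x ^ p)"
proof (rule injI)
  fix x y :: 'a assume "x ^ p = y ^ p"
  have ps: "p ^ s = p * p ^ (s - 1)" using s_pos by (cases s) auto
  have "x = (x ^ p) ^ (p ^ (s-1))" using frob_ps[of x] ps by (simp add: power_mult)
  also have "\<dots> = (y ^ p) ^ (p ^ (s-1))" using \<open>x ^ p = y ^ p\<close> by simp
  also have "\<dots> = y" using frob_ps[of y] ps by (simp add: power_mult)
  finally show "x = y" .
qed

lemma frob_surj: "surj (\<lambda>x::'a. x ^ p)"
  using finite_UNIV_inj_surj frob_inj finite by blast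

lemma trace_frob: "trace_Fq p s ((x::'a) ^ p) = trace_Fq p s x"
proof -
  have "trace_Fq p s (x ^ p) = (\<Sum>i<s. x ^ (p ^ Suc i))"
    unfolding trace_Fq_def by (simp add: power_mult[symmetric] mult.commute)
  also have "\<dots> = (\<Sum>i<s. x ^ (p ^ i))"
  proof -
    have "x ^ (p ^ 0) + (\<Sum>i<s. x ^ (p ^ Suc i)) = (\<Sum>i<Suc s. x ^ (p ^ i))"
      by (rule sum.lessThan_Suc_shift[symmetric])
    also have "\<dots> = (\<Sum>i<s. x ^ (p ^ i)) + x ^ (p ^ s)" by simp
    also have "x ^ (p ^ s) = x ^ (p ^ 0)" using frob_ps[of x] by simp
    finally show ?thesis by (simp add: add.commute)
  qed
  finally show ?thesis unfolding trace_Fq_def .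
qed

lemma trace_nat_frob: "trace_nat p s ((x::'a) ^ p) = trace_nat p s x"
  unfolding trace_nat_def trace_frob ..

lemma gauss_frob1:
  assumes "mult_char (lam :: 'a \<Rightarrow> complex)"
  shows "gauss_sum p s (char_pow lam (p * j)) = gauss_sum p s (char_pow lam j)"
proof -
  let ?f = "\<lambda>x::'a. lam x ^ j * zeta p ^ trace_nat p s x"
  have "gauss_sum p s (char_pow lam j) = sum ?f ((\<lambda>x. x ^ p) ` UNIV)"
    using frob_surj unfolding gauss_sum_def char_pow_def by simp
  also have "\<dots> = sum (?f \<circ> (\<lambda>x. x ^ p)) UNIV"
    by (rule sum.reindex[OF frob_inj])
  also have "\<dots> = gauss_sum p s (char_pow lam (p * j))"
    unfolding gauss_sum_def char_pow_def
    by (rule sum.cong) (auto simp: char_power[OF assms] trace_nat_frob power_mult)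
  finally show ?thesis ..
qed

lemma gauss_frob:
  assumes "mult_char (lam :: 'a \<Rightarrow> complex)"
  shows "gauss_sum p s (char_pow lam (p ^ K * j)) = gauss_sum p s (char_pow lam j)"
proof (induction K)
  case 0 thus ?case by simp
next
  case (Suc K)
  have "gauss_sum p s (char_pow lam (p ^ Suc K * j)) = gauss_sum p s (char_pow lam (p * (p ^ K * j)))"
    by (simp add: mult.assoc)
  also have "\<dots> = gauss_sum p s (char_pow lam (p ^ K * j))" by (rule gauss_frob1[OF assms])
  finally show ?case using Suc by simp
qed

lemma gauss_per:
  assumes mc: "mult_char (lam :: 'a \<Rightarrow> complex)" and ord: "char_order lam = 2 ^ m"
    and a: "a \<ge> 1" and b: "b \<ge> 1" and ab: "a mod 2 ^ m = b mod 2 ^ m"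
  shows "gauss_sum p s (char_pow lam a) = gauss_sum p s (char_pow lam b)"
proof -
  let ?P = "\<lambda>k. 0 < k \<and> (\<forall>x::'a. x \<noteq> 0 \<longrightarrow> lam x ^ k = 1)"
  have "?P (CARD('a) - 1)"
  proof
    show "0 < CARD('a) - 1" using card_ge2[where 'a='a] by simp
    show "\<forall>x::'a. x \<noteq> 0 \<longrightarrow> lam x ^ (CARD('a) - 1) = 1"
      using fermat_field char_power[OF mc] char_one[OF mc] by metis
  qed
  hence "?P (LEAST k. ?P k)" by (rule LeastI)
  hence one: "\<And>x::'a. x \<noteq> 0 \<Longrightarrow> lam x ^ (2 ^ m) = 1"
    using ord unfolding char_order_def by simp
  have red: "lam x ^ c = lam x ^ (c mod 2 ^ m)" if "x \<noteq> 0" for x :: 'a and c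
  proof -
    have "lam x ^ c = lam x ^ (2 ^ m * (c div 2 ^ m) + c mod 2 ^ m)" by simp
    also have "\<dots> = lam x ^ (c mod 2 ^ m)"
      by (simp only: power_add power_mult one[OF that]) simp
    finally show ?thesis .
  qed
  have "char_pow lam a = char_pow lam b"
  proof
    fix x :: 'a
    show "char_pow lam a x = char_pow lam b x"
    proof (cases "x = 0")
      case True
      with mc a b show ?thesis unfolding char_pow_def mult_char_def by (simp add: power_0_left)
    next
      case False thus ?thesis unfolding char_pow_def using red ab by metis
    qed
  qed
  thus ?thesis by simp
qed

end


definition Od :: "nat \<Rightarrow> nat set" where "Od r = {j. 1 \<le> j \<and> j \<le> 2^r - 1 \<and> odd j}"

lemma Od_finite: "finite (Od r)" unfolding Od_def by (rule finite_subset[of _ "{..2^r}"]) auto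

lemma decomp: "(\<Sum>j=1..2^m-1. f j) = (\<Sum>r=1..m. \<Sum>j0\<in>Od r. f (2^(m-r) * j0))"
proof (induction m arbitrary: f)
  case 0 thus ?case by simp
next
  case (Suc m)
  have seteq: "{1..2^Suc m - 1} = Od (Suc m) \<union> (\<lambda>k. 2*k) ` {1..2^m-1}"
  proof (rule set_eqI, rule iffI)
    fix x :: nat assume x: "x \<in> {1..2^Suc m - 1}"
    show "x \<in> Od (Suc m) \<union> (\<lambda>k. 2*k) ` {1..2^m-1}"
    proof (cases "odd x")
      case True thus ?thesis using x unfolding Od_def by auto
    next
      case False then obtain k where k: "x = 2*k" by auto
      have "k \<in> {1..2^m-1}" using x k by auto
      thus ?thesis using k by auto
    qed
  next
    fix x :: nat assume "x \<in> Od (Suc m) \<union> (\<lambda>k. 2*k) ` {1..2^m-1}"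
    thus "x \<in> {1..2^Suc m - 1}" unfolding Od_def by auto
  qed
  have disj: "Od (Suc m) \<inter> (\<lambda>k. 2*k) ` {1..2^m-1} = {}" unfolding Od_def by auto
  have inj: "inj_on (\<lambda>k::nat. 2*k) {1..2^m-1}" by (auto simp: inj_on_def)
  have "(\<Sum>j=1..2^Suc m-1. f j) = (\<Sum>j\<in>Od (Suc m). f j) + (\<Sum>j\<in>(\<lambda>k. 2*k) ` {1..2^m-1}. f j)"
    unfolding seteq by (rule sum.union_disjoint) (use Od_finite disj in \<open>simp_all\<close>)
  also have "(\<Sum>j\<in>(\<lambda>k. 2*k) ` {1..2^m-1}. f j) = (\<Sum>k=1..2^m-1. f (2*k))"
    using sum.reindex[OF inj, of f] by (simp add: comp_def)
  also have "\<dots> = (\<Sum>r=1..m. \<Sum>j0\<in>Od r. f (2 * (2^(m-r) * j0)))" by (rule Suc.IH)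
  also have "\<dots> = (\<Sum>r=1..m. \<Sum>j0\<in>Od r. f (2^(Suc m-r) * j0))"
    by (rule sum.cong) (auto simp: Suc_diff_le mult.assoc)
  finally show ?case by (simp add: add.commute)
qed

lemma reindex_odd:
  assumes u: "odd u"
  shows "(\<Sum>j\<in>Od r. F j) = (\<Sum>j\<in>Od r. F ((u*j) mod 2^r))"
proof (cases "r = 0")
  case True thus ?thesis unfolding Od_def by simp
next
  case False
  let ?h = "\<lambda>j. (u*j) mod 2^r"
  have cop: "coprime u (2^r)" using u by simp
  have inj: "inj_on ?h (Od r)"
  proof (rule inj_onI)
    fix x y assume x: "x \<in> Od r" and y: "y \<in> Od r" and e: "?h x = ?h y"
    have "[u*x = u*y] (mod 2^r)" using e unfolding cong_def .
    hence "[x = y] (mod 2^r)" using cong_mult_lcancel_nat[OF cop] by simp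
    moreover have "x < 2^r" "y < 2^r" using x y unfolding Od_def by auto
    ultimately show "x = y" unfolding cong_def by simp
  qed
  have sub: "?h ` Od r \<subseteq> Od r"
  proof
    fix z assume "z \<in> ?h ` Od r"
    then obtain j where j: "j \<in> Od r" and z: "z = ?h j" by auto
    have "z mod 2 = (u*j) mod 2" using z False by (simp add: mod_mod_cancel)
    moreover have "odd (u*j)" using j u unfolding Od_def by simp
    ultimately have "z mod 2 = 1" using odd_iff_mod_2_eq_one[THEN iffD1] by metis
    hence oz: "odd z" by (rule odd_iff_mod_2_eq_one[THEN iffD2])
    have "z < 2^r" using z by simp
    with oz show "z \<in> Od r" unfolding Od_def by (auto elim: oddE)
  qed
  have img: "?h ` Od r = Od r" by (rule endo_inj_surj[OF Od_finite sub inj])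
  have "(\<Sum>j\<in>Od r. F j) = (\<Sum>j\<in>?h ` Od r. F j)" using img by simp
  also have "\<dots> = (\<Sum>j\<in>Od r. F (?h j))" by (simp add: sum.reindex[OF inj])
  finally show ?thesis .
qed

definition Wg :: "(nat \<Rightarrow> complex) \<Rightarrow> nat \<Rightarrow> nat \<Rightarrow> nat \<Rightarrow> nat \<Rightarrow> complex" where
  "Wg G m r t c = (\<Sum>j0\<in>Od r. G (2^(m-r) * j0) * zeta (2^(m-t)) ^ (2^(m-r) * c * j0))"

definition Gs :: "(nat \<Rightarrow> complex) \<Rightarrow> nat \<Rightarrow> nat \<Rightarrow> complex" where
  "Gs G m r = (\<Sum>j0\<in>Od r. G (2^(m-r) * j0))"

lemma W_triv: assumes "r \<le> t" "t \<le> m" shows "Wg G m r t c = Gs G m r"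
  unfolding Wg_def Gs_def
proof (rule sum.cong[OF refl])
  fix j assume "j \<in> Od r"
  have "(2::nat)^(m-r) = 2^(m-t) * 2^(t-r)" using assms by (simp add: power_add[symmetric])
  hence "zeta (2^(m-t)) ^ (2^(m-r) * c * j) = zeta (2^(m-t)) ^ (0 + 2^(m-t) * (2^(t-r)*c*j))"
    by (simp add: mult.assoc)
  also have "\<dots> = 1" by (subst zeta_add_full) auto
  finally show "G (2^(m-r) * j) * zeta (2^(m-t)) ^ (2^(m-r) * c * j) = G (2^(m-r) * j)" by simp
qed

lemma W_congr: assumes "r \<le> m" "t \<le> r" "c mod 2^(r-t) = c' mod 2^(r-t)"
  shows "Wg G m r t c = Wg G m r t c'"
  unfolding Wg_def
proof (rule sum.cong[OF refl])
  fix j assume "j \<in> Od r"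
  have N: "(2::nat)^(m-t) = 2^(m-r) * 2^(r-t)" using assms by (simp add: power_add[symmetric])
  have "(2^(m-r) * c * j) mod 2^(m-t) = 2^(m-r) * ((c*j) mod 2^(r-t))"
    unfolding N by (simp add: mult.assoc mod_mult_mult1)
  also have "(c*j) mod 2^(r-t) = (c'*j) mod 2^(r-t)"
    by (metis assms(3) mod_mult_left_eq)
  also have "2^(m-r) * ((c'*j) mod 2^(r-t)) = (2^(m-r) * c' * j) mod 2^(m-t)"
    unfolding N by (simp add: mult.assoc mod_mult_mult1)
  finally have "zeta (2^(m-t)) ^ (2^(m-r) * c * j) = zeta (2^(m-t)) ^ (2^(m-r) * c' * j)"
    by (intro zeta_cong) auto
  thus "G (2^(m-r) * j) * zeta (2^(m-t)) ^ (2^(m-r) * c * j) = G (2^(m-r) * j) * zeta (2^(m-t)) ^ (2^(m-r) * c' * j)"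
    by simp
qed

lemma W_half: assumes "t < r" "r \<le> m" "odd w"
  shows "Wg G m r t (c + 2^(r-t-1) * w) = - Wg G m r t c"
  unfolding Wg_def sum_negf[symmetric]
proof (rule sum.cong[OF refl])
  fix j assume j: "j \<in> Od r"
  hence oj: "odd j" unfolding Od_def by simp
  have N: "(2::nat)^(m-t) = 2 * 2^(m-t-1)" using assms by (simp add: power_Suc[symmetric] Suc_diff_Suc)
  have e: "(2::nat)^(m-r) * 2^(r-t-1) = 2^(m-t-1)" using assms by (simp add: power_add[symmetric])
  have "2^(m-r) * (c + 2^(r-t-1) * w) * j = 2^(m-r)*c*j + 2^(m-t-1) * (w*j)"
    using e by (simp add: algebra_simps)
  hence "zeta (2^(m-t)) ^ (2^(m-r) * (c + 2^(r-t-1) * w) * j) = - (zeta (2^(m-t)) ^ (2^(m-r)*c*j))"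
    unfolding N using oj assms(3) by (simp add: zeta_add_half)
  thus "G (2^(m-r) * j) * zeta (2^(m-t)) ^ (2^(m-r) * (c + 2^(r-t-1) * w) * j) =
        - (G (2^(m-r) * j) * zeta (2^(m-t)) ^ (2^(m-r) * c * j))" by simp
qed

context
  fixes G :: "nat \<Rightarrow> complex" and p m :: nat
  assumes HG1: "\<And>K j. G (p^K * j) = G j"
    and HG2: "\<And>a b. a \<ge> 1 \<Longrightarrow> b \<ge> 1 \<Longrightarrow> a mod 2^m = b mod 2^m \<Longrightarrow> G a = G b"
begin

lemma W_mult: assumes "r \<le> m" "t \<le> m" "odd (p^K)"
  shows "Wg G m r t (p^K * c) = Wg G m r t c"
proof -
  let ?u = "p^K"
  let ?g = "\<lambda>c j. G (2^(m-r) * j) * zeta (2^(m-t)) ^ (2^(m-r) * c * j)"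
  have M: "(2::nat)^m = 2^(m-r) * 2^r" using assms by (simp add: power_add[symmetric])
  have "Wg G m r t c = (\<Sum>j\<in>Od r. ?g c ((?u*j) mod 2^r))"
    unfolding Wg_def by (rule reindex_odd[OF assms(3)])
  also have "\<dots> = (\<Sum>j\<in>Od r. ?g (?u*c) j)"
  proof (rule sum.cong[OF refl])
    fix j assume j: "j \<in> Od r"
    hence oj: "odd j" unfolding Od_def by simp
    have r1: "r \<ge> 1" using j unfolding Od_def by (cases r) auto
    have key: "2^(m-r) * ((?u*j) mod 2^r) = (2^(m-r) * (?u*j)) mod 2^m"
      unfolding M by (simp add: mod_mult_mult1)
    have om: "odd ((?u*j) mod 2^r)"
    proof -
      have "((?u*j) mod 2^r) mod 2 = (?u*j) mod 2" using r1 by (simp add: mod_mod_cancel)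
      moreover have "odd (?u*j)" using oj assms(3) by simp
      ultimately have "((?u*j) mod 2^r) mod 2 = 1" using odd_iff_mod_2_eq_one[THEN iffD1] by metis
      thus ?thesis by (rule odd_iff_mod_2_eq_one[THEN iffD2])
    qed
    have "G (2^(m-r) * ((?u*j) mod 2^r)) = G (2^(m-r) * (?u*j))"
    proof (rule HG2)
      show "1 \<le> 2^(m-r) * ((?u*j) mod 2^r)" using odd_pos[OF om] by (simp add: Suc_le_eq)
      show "1 \<le> 2^(m-r) * (?u*j)" using odd_pos[OF oj] odd_pos[OF assms(3)] by (simp add: Suc_le_eq)
      show "2^(m-r) * ((?u*j) mod 2^r) mod 2^m = 2^(m-r) * (?u*j) mod 2^m" unfolding key by simp
    qed
    also have "\<dots> = G (?u * (2^(m-r) * j))" by (simp add: ac_simps)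
    also have "\<dots> = G (2^(m-r) * j)" by (rule HG1)
    finally have g1: "G (2^(m-r) * ((?u*j) mod 2^r)) = G (2^(m-r) * j)" .
    have "(2^(m-r) * c * ((?u*j) mod 2^r)) mod 2^m = (c * ((2^(m-r) * (?u*j)) mod 2^m)) mod 2^m"
      using key by (simp add: ac_simps)
    also have "\<dots> = (c * (2^(m-r) * (?u*j))) mod 2^m" by (simp add: mod_mult_right_eq)
    finally have "(2^(m-r) * c * ((?u*j) mod 2^r)) mod 2^m mod 2^(m-t) = (2^(m-r) * (?u*c) * j) mod 2^m mod 2^(m-t)"
      by (simp add: ac_simps)
    hence "(2^(m-r) * c * ((?u*j) mod 2^r)) mod 2^(m-t) = (2^(m-r) * (?u*c) * j) mod 2^(m-t)"
      by (simp add: mod_mod_cancel le_imp_power_dvd)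
    hence "zeta (2^(m-t)) ^ (2^(m-r) * c * ((?u*j) mod 2^r)) = zeta (2^(m-t)) ^ (2^(m-r) * (?u*c) * j)"
      by (intro zeta_cong) auto
    thus "?g c ((?u*j) mod 2^r) = ?g (?u*c) j" using g1 by simp
  qed
  also have "\<dots> = Wg G m r t (?u*c)" unfolding Wg_def ..
  finally show ?thesis ..
qed

lemma W_vanish: assumes "t < r" "r \<le> m" "odd c" "p^K = 1 + 2^(r-t-1) * w" "odd w" "odd (p^K)"
  shows "Wg G m r t c = 0"
proof -
  have "Wg G m r t c = Wg G m r t (p^K * c)" using W_mult[of r t K c] assms by simp
  also have "p^K * c = c + 2^(r-t-1) * (w*c)" using assms(4) by (simp add: algebra_simps)
  also have "Wg G m r t (c + 2^(r-t-1) * (w*c)) = - Wg G m r t c"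
    by (rule W_half) (use assms in auto)
  finally show ?thesis by simp
qed

end


lemma sq_step: assumes "a \<ge> 2" "odd w"
  shows "\<exists>w'. odd w' \<and> (1 + 2^a*w)^2 = 1 + 2^(a+1)*(w'::nat)"
proof (intro exI conjI)
  have ev: "even ((2::nat)^(a-1)*w^2)" using assms by (cases "a-1") auto
  show "odd (w + 2^(a-1)*w^2)" using ev assms by simp
  have "(2::nat)^(a+1) * 2^(a-1) = 2^(a+1+(a-1))" by (simp only: power_add)
  also have "a+1+(a-1) = a+a" using assms by simp
  finally have e: "(2::nat)^(a+1) * 2^(a-1) = 2^a * 2^a" by (simp only: power_add)
  show "(1 + 2^a*w)^2 = 1 + 2^(a+1)*(w + 2^(a-1)*w^2)"
  proof -
    define A where "A = (2::nat)^a"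
    define B where "B = (2::nat)^(a-1)"
    have e2: "(2::nat)^(a+1) = 2*A" unfolding A_def by simp
    have e3: "2*A*B = A*A" using e unfolding A_def B_def e2[unfolded A_def] .
    have "(1 + A*w)^2 = 1 + 2*A*w + (2*A*B)*w^2" unfolding e3 by (simp add: power2_eq_square algebra_simps)
    also have "\<dots> = 1 + 2*A*(w + B*w^2)" by (simp add: algebra_simps)
    finally show ?thesis unfolding e2 A_def B_def .
  qed
qed

lemma pow_step:
  assumes "(p::nat)^(2^k) = 1 + 2^a*w" "odd w" "a \<ge> 2"
    and b: "b = a + 1"
  shows "\<exists>w'. odd w' \<and> p^(2^Suc k) = 1 + 2^b*w'"
proof -
  obtain w' where w': "odd w'" "(1 + 2^a*w)^2 = 1 + 2^(a+1)*w'"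
    using sq_step[of a w] assms by auto
  have "(2::nat)^Suc k = 2^k * 2" by simp
  hence "p^(2^Suc k) = (p^(2^k))^2" by (simp only: power_mult)
  also have "\<dots> = (1 + 2^a*w)^2" by (simp only: assms(1))
  also have "\<dots> = 1 + 2^(a+1)*w'" by (rule w'(2))
  finally show ?thesis using w'(1) b by blast
qed

lemma pow5: assumes "p mod 8 = (5::nat)" shows "\<exists>w. odd w \<and> p^(2^k) = 1 + 2^(k+2)*w"
proof (induction k)
  case 0
  obtain a where a: "p = 8*a + 5" using assms by (metis div_mult_mod_eq mult.commute)
  show ?case by (intro exI[of _ "2*a+1"]) (simp add: a)
next
  case (Suc k)
  then obtain w where w: "odd w" "p^(2^k) = 1 + 2^(k+2)*w" by blast
  show ?case by (rule pow_step[OF w(2) w(1)]) simp_all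
qed

lemma pow3: assumes "p mod 8 = (3::nat)" shows "\<exists>w. odd w \<and> p^(2^(k+1)) = 1 + 2^(k+3)*w"
proof (induction k)
  case 0
  obtain a where a: "p = 8*a + 3" using assms by (metis div_mult_mod_eq mult.commute)
  have "p^(2^(0+1)) = p * p" by (simp add: power2_eq_square)
  also have "\<dots> = 1 + 8 * (8*a*a + 6*a + 1)" unfolding a by (simp add: algebra_simps)
  finally have "p^(2^(0+1)) = 1 + 2^(0+3) * (8*a*a + 6*a + 1)" by simp
  thus ?case by (intro exI[of _ "8*a*a + 6*a + 1"]) simp
next
  case (Suc k)
  then obtain w where w: "odd w" "p^(2^(k+1)) = 1 + 2^(k+3)*w" by blast
  have "Suc (k+1) = Suc k + 1" by simp
  thus ?case using pow_step[OF w(2) w(1), of "Suc k + 3"] by simp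
qed

definition Ct :: "nat \<Rightarrow> nat set" where "Ct M = {c. 1 \<le> c \<and> c \<le> 2^M \<and> odd c}"

lemma Ct_sum: assumes "M \<ge> 1" shows "(\<Sum>c\<in>Ct M. F c) = (\<Sum>k<2^(M-1). F (2*k+1))"
proof -
  have P: "(2::nat)^M = 2 * 2^(M-1)" using assms by (cases M) auto
  have eq: "Ct M = (\<lambda>k. 2*k+1) ` {..<2^(M-1)}"
  proof (rule set_eqI, rule iffI)
    fix c :: nat assume "c \<in> Ct M"
    hence c: "1 \<le> c" "c \<le> 2^M" "odd c" unfolding Ct_def by auto
    then obtain k where k: "c = 2*k+1" by (auto elim: oddE)
    have "k < 2^(M-1)" using c(2) k P by simp
    thus "c \<in> (\<lambda>k. 2*k+1) ` {..<2^(M-1)}" using k by auto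
  next
    fix c :: nat assume "c \<in> (\<lambda>k. 2*k+1) ` {..<2^(M-1)}"
    thus "c \<in> Ct M" unfolding Ct_def using P by auto
  qed
  have inj: "inj_on (\<lambda>k::nat. 2*k+1) {..<2^(M-1)}" by (auto simp: inj_on_def)
  show ?thesis unfolding eq using sum.reindex[OF inj, of F] by (simp add: comp_def)
qed

lemma sum2: "(\<Sum>k<2*(L::nat). F k) = (\<Sum>i<L. F (2*i) + F (2*i+1))"
proof (induction L)
  case 0 thus ?case by simp
next
  case (Suc L)
  have "2 * Suc L = Suc (Suc (2*L))" by simp
  hence "(\<Sum>k<2*Suc L. F k) = (\<Sum>k<2*L. F k) + F (2*L) + F (2*L+1)" by simp
  thus ?case using Suc by (simp add: add.assoc)
qed

lemma sum4: "(\<Sum>k<4*(L::nat). F k) = (\<Sum>i<L. F (4*i) + F (4*i+1) + F (4*i+2) + F (4*i+3))"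
proof (induction L)
  case 0 thus ?case by simp
next
  case (Suc L)
  have "4 * Suc L = Suc (Suc (Suc (Suc (4*L))))" by simp
  hence "(\<Sum>k<4*Suc L. F k) = (\<Sum>k<4*L. F k) + F (4*L) + F (4*L+1) + F (4*L+2) + F (4*L+3)"
    by (simp add: numeral_eq_Suc)
  thus ?case using Suc by (simp add: add.assoc)
qed

lemma ivl_split: "a \<le> m \<Longrightarrow> (\<Sum>r=1..m. f r) = (\<Sum>r=1..a. f r) + (\<Sum>r=Suc a..m. f r)"
proof -
  assume a: "a \<le> m"
  have "{1..m} = {1..a} \<union> {Suc a..m}" using a by auto
  thus ?thesis by (simp add: sum.union_disjoint)
qed

definition inner :: "(nat \<Rightarrow> complex) \<Rightarrow> nat \<Rightarrow> nat \<Rightarrow> nat \<Rightarrow> complex" where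
  "inner G m c t = (\<Sum>j=1..2^m-1. G j * zeta (2^(m-t)) ^ (c*j))"

lemma inner_decomp: "inner G m c t = (\<Sum>r=1..m. Wg G m r t c)"
  unfolding inner_def Wg_def decomp by (simp add: ac_simps)

lemma W_low: assumes "r \<le> t+1" "r \<le> m" "t \<le> m" "odd c"
  shows "Wg G m r t c = Wg G m r t 1"
proof (cases "r \<le> t")
  case True thus ?thesis using W_triv assms by metis
next
  case False
  hence "r - t = 1" using assms by simp
  thus ?thesis using assms False
    by (intro W_congr) (auto simp: odd_iff_mod_2_eq_one)
qed

context
  fixes G :: "nat \<Rightarrow> complex" and p m :: nat
  assumes HG1: "\<And>K j. G (p^K * j) = G j"
    and HG2: "\<And>a b. a \<ge> 1 \<Longrightarrow> b \<ge> 1 \<Longrightarrow> a mod 2^m = b mod 2^m \<Longrightarrow> G a = G b"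
    and podd: "odd p"
begin

lemma partA: assumes "m \<ge> 1"
  shows "(\<Sum>c\<in>Ct (m-(m-1)). (inner G m c (m-1))^n) + (\<Sum>c\<in>Ct (m-m). (inner G m c m)^n)
     = ((\<Sum>r=1..m-1. Wg G m r m 1) + Wg G m m m 1)^n + ((\<Sum>r=1..m-1. Wg G m r m 1) - Wg G m m m 1)^n"
proof -
  have C1: "Ct (m-(m-1)) = {1}" using assms unfolding Ct_def by (auto elim: oddE)
  have C0: "Ct (m-m) = {1}" unfolding Ct_def by auto
  obtain m' where m': "m = Suc m'" using assms by (cases m) auto
  have spl: "(\<Sum>r=1..m. f r) = (\<Sum>r=1..m-1. f r) + f m" for f :: "nat \<Rightarrow> complex"
    unfolding m' by (simp add: sum.cl_ivl_Suc)
  have i1: "inner G m 1 m = (\<Sum>r=1..m-1. Wg G m r m 1) + Wg G m m m 1"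
    unfolding inner_decomp spl ..
  have low: "(\<Sum>r=1..m-1. Wg G m r (m-1) 1) = (\<Sum>r=1..m-1. Wg G m r m 1)"
  proof (rule sum.cong[OF refl])
    fix r assume "r \<in> {1..m-1}"
    hence "r \<le> m-1" "r \<le> m" by auto
    thus "Wg G m r (m-1) 1 = Wg G m r m 1" using W_triv[of r "m-1" m G 1] W_triv[of r m m G 1] by simp
  qed
  have "Wg G m m (m-1) (0 + 2^(m-(m-1)-1)*1) = - Wg G m m (m-1) 0"
    by (rule W_half) (use assms in auto)
  moreover have "Wg G m m (m-1) 0 = Wg G m m m 1"
    using zeta_one by (simp add: W_triv Wg_def Gs_def)
  moreover have "m-(m-1)-1 = 0" using assms by simp
  ultimately have hi: "Wg G m m (m-1) 1 = - Wg G m m m 1" by simp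
  have i2: "inner G m 1 (m-1) = (\<Sum>r=1..m-1. Wg G m r m 1) - Wg G m m m 1"
    unfolding inner_decomp spl low hi by simp
  have s1: "sum f {1::nat} = f 1" for f :: "nat \<Rightarrow> complex" by simp
  show ?thesis unfolding C1 C0 s1 i1 i2 by (simp add: add.commute)
qed

lemma W_vanish_p: assumes "t + 2 = r" "r \<le> m" "odd c" "p mod 8 = 3"
  shows "Wg G m r t c = 0"
proof (rule W_vanish[where G=G and p=p and m=m, OF HG1 HG2, of t r c 1 "(p-1) div 2"])
  obtain a where a: "p = 8*a + 3" using assms(4) by (metis div_mult_mod_eq mult.commute)
  have "r-t-1 = 1" using assms by simp
  moreover have "p = 1 + 2 * ((p-1) div 2)" unfolding a by simp
  ultimately show "p^1 = 1 + 2^(r-t-1) * ((p-1) div 2)" by simp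
  have "(p-1) div 2 = 4*a+1" unfolding a by simp
  thus "odd ((p-1) div 2)" by simp
qed (use assms podd in auto)

lemma W_vanish_3: assumes "t + 4 \<le> r" "r \<le> m" "odd c" "p mod 8 = 3"
  shows "Wg G m r t c = 0"
proof -
  obtain w where w: "odd w" "p^(2^((r-t-4)+1)) = 1 + 2^((r-t-4)+3)*w" using pow3[OF assms(4)] by blast
  have e1: "(r-t-4)+3 = r-t-1" using assms by simp
  show ?thesis
  proof (rule W_vanish[where G=G and p=p and m=m, OF HG1 HG2, of t r c "2^((r-t-4)+1)" w])
    show "p ^ 2 ^ (r - t - 4 + 1) = 1 + 2 ^ (r - t - 1) * w" using w(2) unfolding e1 .
  qed (use assms w podd in auto)
qed

lemma W_vanish_5: assumes "t + 3 \<le> r" "r \<le> m" "odd c" "p mod 8 = 5"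
  shows "Wg G m r t c = 0"
proof -
  obtain w where w: "odd w" "p^(2^(r-t-3)) = 1 + 2^((r-t-3)+2)*w" using pow5[OF assms(4)] by blast
  have e1: "(r-t-3)+2 = r-t-1" using assms by simp
  show ?thesis
  proof (rule W_vanish[where G=G and p=p and m=m, OF HG1 HG2, of t r c "2^(r-t-3)" w])
    show "p ^ 2 ^ (r - t - 3) = 1 + 2 ^ (r - t - 1) * w" using w(2) unfolding e1 .
  qed (use assms w podd in auto)
qed

lemma partB: assumes "m \<ge> 3" "p mod 8 = 3"
  shows "(\<Sum>c\<in>Ct (m-(m-2)). (inner G m c (m-2))^n) = 2 * (\<Sum>r=1..m-1. Wg G m r (m-2) 1)^n"
proof -
  have M: "m-(m-2) = 2" using assms by simp
  obtain m' where m': "m = Suc m'" using assms by (cases m) auto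
  have spl: "(\<Sum>r=1..m. f r) = (\<Sum>r=1..m-1. f r) + f m" for f :: "nat \<Rightarrow> complex"
    unfolding m' by (simp add: sum.cl_ivl_Suc)
  have inn: "inner G m c (m-2) = (\<Sum>r=1..m-1. Wg G m r (m-2) 1)" if c: "odd c" for c
  proof -
    have "Wg G m m (m-2) c = 0" by (rule W_vanish_p) (use assms c in auto)
    moreover have "(\<Sum>r=1..m-1. Wg G m r (m-2) c) = (\<Sum>r=1..m-1. Wg G m r (m-2) 1)"
      by (rule sum.cong[OF refl]) (rule W_low, use assms c in auto)
    ultimately show ?thesis unfolding inner_decomp spl by simp
  qed
  have "(\<Sum>c\<in>Ct 2. (inner G m c (m-2))^n) = (\<Sum>k<2^(2-1). (inner G m (2*k+1) (m-2))^n)"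
    by (rule Ct_sum) simp
  also have "\<dots> = (inner G m 1 (m-2))^n + (inner G m 3 (m-2))^n"
    by (simp add: numeral_2_eq_2 numeral_3_eq_3)
  also have "\<dots> = 2 * (\<Sum>r=1..m-1. Wg G m r (m-2) 1)^n" using inn[of 1] inn[of 3] by simp
  finally show ?thesis unfolding M .
qed

lemma partC: assumes "m \<ge> 3" "p mod 8 = 3" "t \<le> m - 3"
  shows "(\<Sum>c\<in>Ct (m-t). (inner G m c t)^n) = 2^(m-t-2) *
     (((\<Sum>r=1..t+1. Wg G m r t 1) + Wg G m (t+3) t 1)^n + ((\<Sum>r=1..t+1. Wg G m r t 1) - Wg G m (t+3) t 1)^n)"
proof -
  define X where "X = (\<Sum>r=1..t+1. Wg G m r t 1)"
  define Y where "Y = Wg G m (t+3) t 1"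
  have inn: "inner G m c t = X + Wg G m (t+3) t c" if c: "odd c" for c
  proof -
    have "inner G m c t = (\<Sum>r=1..t+3. Wg G m r t c) + (\<Sum>r=Suc (t+3)..m. Wg G m r t c)"
      unfolding inner_decomp by (rule ivl_split) (use assms in auto)
    also have "(\<Sum>r=Suc (t+3)..m. Wg G m r t c) = 0"
      by (rule sum.neutral) (use assms c W_vanish_3 in auto)
    also have "(\<Sum>r=1..t+3. Wg G m r t c) = (\<Sum>r=1..t+1. Wg G m r t c) + Wg G m (t+2) t c + Wg G m (t+3) t c"
      by (simp add: sum.cl_ivl_Suc numeral_3_eq_3)
    also have "Wg G m (t+2) t c = 0" by (rule W_vanish_p) (use assms c in auto)
    also have "(\<Sum>r=1..t+1. Wg G m r t c) = X" unfolding X_def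
      by (rule sum.cong[OF refl]) (rule W_low, use assms c in auto)
    finally show ?thesis by simp
  qed
  have r3: "t + 3 \<le> m" "t < t + 3" "(t+3) - t = 3" "(t+3)-t-1 = 2" using assms by auto
  have "Wg G m (t+3) t (p^1*1) = Wg G m (t+3) t 1"
    by (rule W_mult[where G=G and p=p and m=m, OF HG1 HG2]) (use r3 podd in auto)
  hence Wp: "Wg G m (t+3) t p = Y" unfolding Y_def by (metis power_one_right mult_1_right)
  have w1: "Wg G m (t+3) t (8*i+1) = Y" for i unfolding Y_def
    by (rule W_congr) (simp_all add: r3)
  have w3: "Wg G m (t+3) t (8*i+3) = Y" for i unfolding Wp[symmetric]
    by (rule W_congr) (simp_all add: r3 assms)
  have w5: "Wg G m (t+3) t (8*i+5) = - Y" for i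
  proof -
    have "Wg G m (t+3) t (8*i+5) = Wg G m (t+3) t (1 + 2^((t+3)-t-1)*1)"
      by (rule W_congr) (simp_all add: r3)
    also have "\<dots> = - Y" unfolding Y_def by (rule W_half) (simp_all add: r3)
    finally show ?thesis .
  qed
  have w7: "Wg G m (t+3) t (8*i+7) = - Y" for i
  proof -
    obtain a where a: "p = 8*a + 3" using assms(2) by (metis div_mult_mod_eq mult.commute)
    have pm: "(p + 4) mod 8 = 7" unfolding a by simp
    have "Wg G m (t+3) t (8*i+7) = Wg G m (t+3) t (p + 2^((t+3)-t-1)*1)"
      by (rule W_congr) (simp_all add: r3 pm)
    also have "\<dots> = - Y" unfolding Wp[symmetric] by (rule W_half) (simp_all add: r3)
    finally show ?thesis .
  qed
  have e1: "m-t-1 = 2 + (m-t-3)" "m-t-2 = 1 + (m-t-3)" using assms by auto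
  have L: "(2::nat)^(m-t-1) = 4 * 2^(m-t-3)" "(2::complex)^(m-t-2) = 2 * 2^(m-t-3)"
    unfolding e1 by (simp_all only: power_add) simp_all
  have "(\<Sum>c\<in>Ct (m-t). (inner G m c t)^n) = (\<Sum>k<2^(m-t-1). (inner G m (2*k+1) t)^n)"
    using assms by (simp add: Ct_sum)
  also have "\<dots> = (\<Sum>i<(2::nat)^(m-t-3). 2 * (X+Y)^n + 2*(X-Y)^n)"
  proof -
    have o: "odd (8*i+1)" "odd (8*i+3)" "odd (8*i+5)" "odd (8*i+7)" for i :: nat by simp_all
    have e: "2*(4*i)+1 = 8*i+1" "2*(4*i+1)+1 = 8*i+3" "2*(4*i+2)+1 = 8*i+5" "2*(4*i+3)+1 = 8*i+7" for i :: nat by simp_all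
    show ?thesis unfolding L(1) sum4 e inn[OF o(1)] inn[OF o(2)] inn[OF o(3)] inn[OF o(4)] w1 w3 w5 w7
      by simp
  qed
  also have "\<dots> = 2^(m-t-2) * ((X+Y)^n + (X-Y)^n)" unfolding L(2) by (simp add: algebra_simps)
  finally show ?thesis unfolding X_def Y_def .
qed

lemma partD: assumes "m \<ge> 2" "p mod 8 = 5" "t \<le> m - 2"
  shows "(\<Sum>c\<in>Ct (m-t). (inner G m c t)^n) = 2^(m-t-2) *
     (((\<Sum>r=1..t+1. Wg G m r t 1) + Wg G m (t+2) t 1)^n + ((\<Sum>r=1..t+1. Wg G m r t 1) - Wg G m (t+2) t 1)^n)"
proof -
  define X where "X = (\<Sum>r=1..t+1. Wg G m r t 1)"
  define Y where "Y = Wg G m (t+2) t 1"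
  have inn: "inner G m c t = X + Wg G m (t+2) t c" if c: "odd c" for c
  proof -
    have "inner G m c t = (\<Sum>r=1..t+2. Wg G m r t c) + (\<Sum>r=Suc (t+2)..m. Wg G m r t c)"
      unfolding inner_decomp by (rule ivl_split) (use assms in auto)
    also have "(\<Sum>r=Suc (t+2)..m. Wg G m r t c) = 0"
      by (rule sum.neutral) (use assms c W_vanish_5 in auto)
    also have "(\<Sum>r=1..t+2. Wg G m r t c) = (\<Sum>r=1..t+1. Wg G m r t c) + Wg G m (t+2) t c"
      by (simp add: sum.cl_ivl_Suc)
    also have "(\<Sum>r=1..t+1. Wg G m r t c) = X" unfolding X_def
      by (rule sum.cong[OF refl]) (rule W_low, use assms c in auto)
    finally show ?thesis by simp
  qed
  have r3: "t + 2 \<le> m" "t < t + 2" "(t+2) - t = 2" "(t+2)-t-1 = 1" using assms by auto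
  have w1: "Wg G m (t+2) t (4*i+1) = Y" for i unfolding Y_def
    by (rule W_congr) (use r3 in simp_all)
  have w3: "Wg G m (t+2) t (4*i+3) = - Y" for i
  proof -
    have "Wg G m (t+2) t (4*i+3) = Wg G m (t+2) t (1 + 2^((t+2)-t-1)*1)"
      by (rule W_congr) (use r3 in simp_all)
    also have "\<dots> = - Y" unfolding Y_def by (rule W_half) (use r3 in simp_all)
    finally show ?thesis .
  qed
  have e1: "m-t-1 = 1 + (m-t-2)" using assms by auto
  have L: "(2::nat)^(m-t-1) = 2 * 2^(m-t-2)"
    unfolding e1 by (simp only: power_add) simp
  have "(\<Sum>c\<in>Ct (m-t). (inner G m c t)^n) = (\<Sum>k<2^(m-t-1). (inner G m (2*k+1) t)^n)"
    using assms by (simp add: Ct_sum)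
  also have "\<dots> = (\<Sum>i<(2::nat)^(m-t-2). (X+Y)^n + (X-Y)^n)"
  proof -
    have o: "odd (4*i+1)" "odd (4*i+3)" for i :: nat by simp_all
    have e: "2*(2*i)+1 = 4*i+1" "2*(2*i+1)+1 = 4*i+3" for i :: nat by simp_all
    show ?thesis unfolding L sum2 e inn[OF o(1)] inn[OF o(2)] w1 w3
      by simp
  qed
  also have "\<dots> = 2^(m-t-2) * ((X+Y)^n + (X-Y)^n)" by simp
  finally show ?thesis unfolding X_def Y_def .
qed

end
theorem corollary1:
  fixes lam :: "'a::{field,finite} \<Rightarrow> complex"
    and p s m n :: nat
  assumes hp: "prime p"
    and hp8: "p mod 8 = 3 \<or> p mod 8 = 5"
    and hq: "CARD('a) = p ^ s"
    and hdvd: "2 ^ m dvd (p ^ s - 1)"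
    and hm3: "p mod 8 = 3 \<Longrightarrow> m \<ge> 3"
    and hm5: "p mod 8 = 5 \<Longrightarrow> m \<ge> 2"
    and hchar: "mult_char lam"
    and hord: "char_order lam = 2 ^ m"
    and hn: "n \<ge> 1"
  shows "(S_sum p s lam m n (m - 1) + S_sum p s lam m n m =
           ((\<Sum>r=1..m-1. W_sum p s lam m r m 1) + W_sum p s lam m m m 1) ^ n
         + ((\<Sum>r=1..m-1. W_sum p s lam m r m 1) - W_sum p s lam m m m 1) ^ n)
     \<and> (p mod 8 = 3 \<longrightarrow>
           S_sum p s lam m n (m - 2) = 2 * (\<Sum>r=1..m-1. W_sum p s lam m r (m - 2) 1) ^ n)
     \<and> (\<forall>t. p mod 8 = 3 \<longrightarrow> t \<le> m - 3 \<longrightarrow>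
           S_sum p s lam m n t = 2 ^ (m - t - 2) *
             (((\<Sum>r=1..t+1. W_sum p s lam m r t 1) + W_sum p s lam m (t+3) t 1) ^ n
            + ((\<Sum>r=1..t+1. W_sum p s lam m r t 1) - W_sum p s lam m (t+3) t 1) ^ n))
     \<and> (\<forall>t. p mod 8 = 5 \<longrightarrow> t \<le> m - 2 \<longrightarrow>
           S_sum p s lam m n t = 2 ^ (m - t - 2) *
             (((\<Sum>r=1..t+1. W_sum p s lam m r t 1) + W_sum p s lam m (t+2) t 1) ^ n
            + ((\<Sum>r=1..t+1. W_sum p s lam m r t 1) - W_sum p s lam m (t+2) t 1) ^ n))"
  proof -
  define G where "G = (\<lambda>j. gauss_sum p s (char_pow lam j))"
  have HG1: "\<And>K j. G (p^K*j) = G j" unfolding G_def by (rule gauss_frob[OF hq hchar])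
  have HG2: "\<And>a b. a \<ge> 1 \<Longrightarrow> b \<ge> 1 \<Longrightarrow> a mod 2^m = b mod 2^m \<Longrightarrow> G a = G b"
    unfolding G_def by (rule gauss_per[OF hq hchar hord])
  have "p mod 8 mod 2 = 1" using hp8 by auto
  hence "p mod 2 = 1" by (simp add: mod_mod_cancel)
  hence podd: "odd p" by (simp add: odd_iff_mod_2_eq_one)
  have S: "\<And>t. S_sum p s lam m n t = (\<Sum>c\<in>Ct (m-t). (inner G m c t)^n)"
    unfolding S_sum_def Ct_def inner_def G_def ..
  have W: "\<And>r t c. W_sum p s lam m r t c = Wg G m r t c"
    unfolding W_sum_def Wg_def Od_def G_def ..
  have m2: "m \<ge> 2" using hp8 hm3 hm5 by auto
  have m1: "(1::nat) \<le> m" using m2 by simp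
  note A = partA[where G=G and p=p and m=m, OF HG1 _ podd]
  note B = partB[where G=G and p=p and m=m, OF HG1 _ podd]
  note C = partC[where G=G and p=p and m=m, OF HG1 _ podd]
  note D = partD[where G=G and p=p and m=m, OF HG1 _ podd]
  show ?thesis unfolding S W
  proof (intro conjI allI impI)
    show "(\<Sum>c\<in>Ct (m-(m-1)). (inner G m c (m-1))^n) + (\<Sum>c\<in>Ct (m-m). (inner G m c m)^n)
     = ((\<Sum>r=1..m-1. Wg G m r m 1) + Wg G m m m 1)^n + ((\<Sum>r=1..m-1. Wg G m r m 1) - Wg G m m m 1)^n"
      by (rule A) ((rule HG2; assumption), fact m1)
  next
    assume h3: "p mod 8 = 3"
    have m3: "3 \<le> m" using hm3 h3 by blast
    show "(\<Sum>c\<in>Ct (m-(m-2)). (inner G m c (m-2))^n) = 2 * (\<Sum>r=1..m-1. Wg G m r (m-2) 1)^n"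
      by (rule B[OF _ m3 h3]) (rule HG2; assumption)
  next
    fix t assume h3: "p mod 8 = 3" and ht: "t \<le> m - 3"
    have m3: "3 \<le> m" using hm3 h3 by blast
    show "(\<Sum>c\<in>Ct (m-t). (inner G m c t)^n) = 2^(m-t-2) *
     (((\<Sum>r=1..t+1. Wg G m r t 1) + Wg G m (t+3) t 1)^n + ((\<Sum>r=1..t+1. Wg G m r t 1) - Wg G m (t+3) t 1)^n)"
      by (rule C[OF _ m3 h3 ht]) (rule HG2; assumption)
  next
    fix t assume h5: "p mod 8 = 5" and ht: "t \<le> m - 2"
    have m2': "2 \<le> m" using hm5 h5 by blast
    show "(\<Sum>c\<in>Ct (m-t). (inner G m c t)^n) = 2^(m-t-2) *
     (((\<Sum>r=1..t+1. Wg G m r t 1) + Wg G m (t+2) t 1)^n + ((\<Sum>r=1..t+1. Wg G m r t 1) - Wg G m (t+2) t 1)^n)"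
      by (rule D[OF _ m2' h5 ht]) (rule HG2; assumption)
  qed
qed

end
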